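(* Let $G$ be an unweighted undirected $n$-vertex graph, let $A$ be a $\beta$-additive clustering-based spanner of $G$ with clustering $\mathcal{C}$ and center map $\mathrm{cnt}$, and let $M$ be an $\alpha$-multiplicative EFT spanner of $G$. Let $H$ be the graph returned by Algorithm 2 (described in the context). Then $H$ has $O(|E(A)|+|E(M)|+n+|\mathcal{C}|^2)$ edges, and $H$ is a $(2\beta+\max\{2,\alpha-3\})$-additive EFT spanner of $G$, i.e. for every $e\in E(G)$ and all $s,t$ connected in $G-e$, $d_{H-e}(s,t)\le d_{G-e}(s,t)+2\beta+\max\{2,\alpha-3\}$.
   Context: $d_X$ is shortest-path distance in $X$; $|\pi|$ is the number of edges of path $\pi$. An $\alpha$-multiplicative EFT spanner is a subgraph $M$ with $d_{M-e}(s,t)\le\alpha\,d_{G-e}(s,t)$ for all edges $e$ and vertices $s,t$. A clustering of $G$ is a partition $\mathcal{C}$ of a subset of $V(G)$ into clusters; each cluster $C$ has a designated center vertex in $C$, and for a clustered vertex $v$, $\mathrm{cnt}(v)$ is the center of its cluster; every non-center clustered vertex is adjacent in $G$ to its center. Unclustered vertices are those in no cluster. A $\beta$-additive spanner $A$ (i.e. $d_A(u,v)\le d_G(u,v)+\beta$ for all $u,v$) is clustering-based with clustering $\mathcal{C}$ if: (i) $A$ contains all edges of $G$ incident to unclustered vertices; (ii) $A$ contains every edge $(v,\mathrm{cnt}(v))$ for clustered $v\neq\mathrm{cnt}(v)$; (iii) for all $u,v\in V(G)$ with $v$ clustered there is a path $\tilde\pi(u,v)$ in $A$ satisfying one of: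 (P1) $|\tilde\pi(u,v)|\le d_G(u,v)+\beta-2$; (P2) $|\tilde\pi(u,v)|=d_G(u,v)+\beta-1$ and either $v=\mathrm{cnt}(v)$ or the last edge of $\tilde\pi(u,v)$ is $(\mathrm{cnt}(v),v)$; (P3) $|\tilde\pi(u,v)|=d_G(u,v)+\beta$, $v\ne\mathrm{cnt}(v)$, and the last edge of $\tilde\pi(u,v)$ is $(\mathrm{cnt}(v),v)$. For clusters $C,C'$ let $\delta(C,C')$ be the set of edges of $G$ with one endpoint in $C$ and the other in $C'$. Algorithm 2: start with $E'=\emptyset$. For every cluster $C$ and every $v\in C$, if there is an edge $(v,x)\in E(G)$ with $x\in C\setminus\{\mathrm{cnt}(v)\}$, add one such edge to $E'$. For every pair of distinct clusters $C,C'$: if $\delta(C,C')$ contains two vertex-disjoint edges, add two such edges to $E'$; else if it contains two distinct edges, add two such edges; otherwise add all of $\delta(C,C')$ (at most one edge). Return $H=(V(G),E'\cup E(M)\cup E(A))$. *)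

theory Defs
  imports Main "HOL-Library.Extended_Nat"
begin

text \<open>Unweighted undirected simple graphs: a finite vertex set V and a set E of
  2-element subsets of V (edges). Subgraphs on the same vertex set are given by edge sets.\<close>

definition graph :: "'a set \<Rightarrow> 'a set set \<Rightarrow> bool" where
  "graph V E \<longleftrightarrow> finite V \<and> E \<subseteq> {{u, v} | u v. u \<in> V \<and> v \<in> V \<and> u \<noteq> v}"

definition is_path :: "'a set set \<Rightarrow> 'a list \<Rightarrow> 'a \<Rightarrow> 'a \<Rightarrow> bool" where
  "is_path F p u v \<longleftrightarrow> p \<noteq> [] \<and> hd p = u \<and> last p = v \<and>
     (\<forall>i. Suc i < length p \<longrightarrow> {p ! i, p ! Suc i} \<in> F)"

definition plen :: "'a list \<Rightarrow> nat" where
  "plen p = length p - 1"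

definition gdist :: "'a set set \<Rightarrow> 'a \<Rightarrow> 'a \<Rightarrow> enat" where
  "gdist F u v = (INF p \<in> {p. is_path F p u v}. enat (plen p))"

definition last_edge_from :: "'a list \<Rightarrow> 'a \<Rightarrow> bool" where
  "last_edge_from p x \<longleftrightarrow> length p \<ge> 2 \<and> p ! (length p - 2) = x"

definition additive_spanner :: "'a set set \<Rightarrow> 'a set set \<Rightarrow> nat \<Rightarrow> bool" where
  "additive_spanner E A \<beta> \<longleftrightarrow> A \<subseteq> E \<and>
     (\<forall>u v. gdist A u v \<le> gdist E u v + enat \<beta>)"

definition mult_EFT_spanner :: "'a set \<Rightarrow> 'a set set \<Rightarrow> 'a set set \<Rightarrow> real \<Rightarrow> bool" where
  "mult_EFT_spanner V E M \<alpha> \<longleftrightarrow> M \<subseteq> E \<and>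
     (\<forall>e\<in>E. \<forall>s\<in>V. \<forall>t\<in>V. gdist (E - {e}) s t \<noteq> \<infinity> \<longrightarrow>
        gdist (M - {e}) s t \<noteq> \<infinity> \<and>
        real (the_enat (gdist (M - {e}) s t)) \<le> \<alpha> * real (the_enat (gdist (E - {e}) s t)))"

definition clustering :: "'a set \<Rightarrow> 'a set set \<Rightarrow> 'a set set \<Rightarrow> ('a \<Rightarrow> 'a) \<Rightarrow> bool" where
  "clustering V E \<C> cnt \<longleftrightarrow>
     (\<forall>X\<in>\<C>. X \<noteq> {} \<and> X \<subseteq> V) \<and>
     (\<forall>X\<in>\<C>. \<forall>Y\<in>\<C>. X \<noteq> Y \<longrightarrow> X \<inter> Y = {}) \<and>
     (\<forall>X\<in>\<C>. \<forall>v\<in>X. cnt v \<in> X) \<and>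
     (\<forall>X\<in>\<C>. \<forall>u\<in>X. \<forall>v\<in>X. cnt u = cnt v) \<and>
     (\<forall>v\<in>\<Union>\<C>. v \<noteq> cnt v \<longrightarrow> {v, cnt v} \<in> E)"

definition clustering_based_spanner ::
  "'a set \<Rightarrow> 'a set set \<Rightarrow> 'a set set \<Rightarrow> nat \<Rightarrow> 'a set set \<Rightarrow> ('a \<Rightarrow> 'a) \<Rightarrow> bool" where
  "clustering_based_spanner V E A \<beta> \<C> cnt \<longleftrightarrow>
     additive_spanner E A \<beta> \<and> clustering V E \<C> cnt \<and>
     (\<forall>e\<in>E. (\<exists>u\<in>e. u \<notin> \<Union>\<C>) \<longrightarrow> e \<in> A) \<and>
     (\<forall>v\<in>\<Union>\<C>. v \<noteq> cnt v \<longrightarrow> {v, cnt v} \<in> A) \<and>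
     (\<forall>u\<in>V. \<forall>v\<in>\<Union>\<C>. gdist E u v \<noteq> \<infinity> \<longrightarrow>
        (\<exists>p. is_path A p u v \<and>
          (let d = int (the_enat (gdist E u v)); l = int (plen p) in
            l \<le> d + int \<beta> - 2
          \<or> (l = d + int \<beta> - 1 \<and> (v = cnt v \<or> last_edge_from p (cnt v)))
          \<or> (l = d + int \<beta> \<and> v \<noteq> cnt v \<and> last_edge_from p (cnt v)))))"

definition delta :: "'a set set \<Rightarrow> 'a set \<Rightarrow> 'a set \<Rightarrow> 'a set set" where
  "delta E X Y = {e \<in> E. \<exists>x\<in>X. \<exists>y\<in>Y. e = {x, y}}"

text \<open>Possible outputs E' of the (nondeterministic) first part of Algorithm 2:
  S v is the (at most one) intra-cluster edge chosen for v, and D X Y the edges chosen for the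
  unordered pair of distinct clusters {X, Y}.\<close>

definition alg2_edges :: "'a set set \<Rightarrow> 'a set set \<Rightarrow> ('a \<Rightarrow> 'a) \<Rightarrow> 'a set set \<Rightarrow> bool" where
  "alg2_edges E \<C> cnt E' \<longleftrightarrow>
    (\<exists>S D.
      (\<forall>X\<in>\<C>. \<forall>v\<in>X.
         let cand = {{v, x} | x. x \<in> X - {cnt v} \<and> {v, x} \<in> E} in
         (cand = {} \<longrightarrow> S v = {}) \<and> (cand \<noteq> {} \<longrightarrow> (\<exists>e\<in>cand. S v = {e}))) \<and>
      (\<forall>X\<in>\<C>. \<forall>Y\<in>\<C>. X \<noteq> Y \<longrightarrow> D X Y = D Y X \<and>
         (let \<delta> = delta E X Y in
          if (\<exists>e1\<in>\<delta>. \<exists>e2\<in>\<delta>. e1 \<inter> e2 = {})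
          then (\<exists>e1\<in>\<delta>. \<exists>e2\<in>\<delta>. e1 \<inter> e2 = {} \<and> D X Y = {e1, e2})
          else if (\<exists>e1\<in>\<delta>. \<exists>e2\<in>\<delta>. e1 \<noteq> e2)
          then (\<exists>e1\<in>\<delta>. \<exists>e2\<in>\<delta>. e1 \<noteq> e2 \<and> D X Y = {e1, e2})
          else D X Y = \<delta>)) \<and>
      E' = (\<Union>X\<in>\<C>. \<Union>v\<in>X. S v) \<union> (\<Union>{D X Y | X Y. X \<in> \<C> \<and> Y \<in> \<C> \<and> X \<noteq> Y}))"

definition alg2_output ::
  "'a set set \<Rightarrow> 'a set set \<Rightarrow> ('a \<Rightarrow> 'a) \<Rightarrow> 'a set set \<Rightarrow> 'a set set \<Rightarrow> 'a set set \<Rightarrow> bool" where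
  "alg2_output E \<C> cnt M A H \<longleftrightarrow> (\<exists>E'. alg2_edges E \<C> cnt E' \<and> H = E' \<union> M \<union> A)"

end

theory Submission
  imports Defs
begin


lemma is_path_single[simp]: "is_path F [u] u u"
  by (simp add: is_path_def)

lemma is_path_mono: "is_path F p u v \<Longrightarrow> F \<subseteq> F' \<Longrightarrow> is_path F' p u v"
  by (auto simp: is_path_def)

lemma all_Suc_split: "(\<forall>i. P i) \<longleftrightarrow> P 0 \<and> (\<forall>i. P (Suc i))"
  by (metis not0_implies_Suc)

lemma is_path_Cons2: "is_path F (x # y # p) u v \<longleftrightarrow> x = u \<and> {x, y} \<in> F \<and> is_path F (y # p) y v"
  unfolding is_path_def
  apply (subst all_Suc_split)
  apply auto
  done

lemma is_path_append:
  assumes "is_path F p u v" "is_path F q v w"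
  shows "is_path F (p @ tl q) u w \<and> plen (p @ tl q) = plen p + plen q"
  using assms
proof (induction p arbitrary: u)
  case Nil then show ?case by (simp add: is_path_def)
next
  case (Cons x p)
  show ?case
  proof (cases p)
    case Nil
    then have "x = u" "u = v" using Cons.prems by (auto simp: is_path_def)
    then show ?thesis using Cons.prems Nil
      by (cases q) (auto simp: plen_def is_path_def)
  next
    case (Cons y p')
    then have h: "x = u" "{x,y} \<in> F" "is_path F p y v" using Cons.prems is_path_Cons2 by fastforce+
    from Cons.IH[OF h(3) Cons.prems(2)] have "is_path F (p @ tl q) y w" "plen (p @ tl q) = plen p + plen q" by auto
    moreover have "p @ tl q = y # (p' @ tl q)" using Cons by simp
    ultimately show ?thesis using h Cons by (auto simp: is_path_Cons2 plen_def)
  qed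
qed

lemma is_path_rev: "is_path F p u v \<Longrightarrow> is_path F (rev p) v u"
  unfolding is_path_def
proof (intro conjI allI impI)
  assume a: "p \<noteq> [] \<and> hd p = u \<and> last p = v \<and> (\<forall>i. Suc i < length p \<longrightarrow> {p ! i, p ! Suc i} \<in> F)"
  show "rev p \<noteq> []" "hd (rev p) = v" "last (rev p) = u" using a by (auto simp: hd_rev last_rev)
  fix i assume i: "Suc i < length (rev p)"
  let ?j = "length p - Suc (Suc i)"
  have "Suc ?j < length p" using i by auto
  then have "{p ! ?j, p ! Suc ?j} \<in> F" using a by blast
  moreover have "rev p ! i = p ! Suc ?j" "rev p ! Suc i = p ! ?j" using i
    by (auto simp: rev_nth Suc_diff_Suc)
  ultimately show "{rev p ! i, rev p ! Suc i} \<in> F" by (simp add: insert_commute)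
qed

lemma plen_rev[simp]: "plen (rev p) = plen p" by (simp add: plen_def)

lemma is_path_take: assumes "is_path F p u v" "j < length p"
  shows "is_path F (take (Suc j) p) u (p ! j) \<and> plen (take (Suc j) p) = j"
proof -
  have len: "length (take (Suc j) p) = Suc j" using assms(2) by simp
  have ne: "take (Suc j) p \<noteq> []" using len by auto
  have "hd (take (Suc j) p) = u" using assms(1) ne unfolding is_path_def by (simp add: hd_take)
  moreover have "last (take (Suc j) p) = p ! j" using len ne by (simp add: last_conv_nth)
  moreover have "\<forall>i. Suc i < length (take (Suc j) p) \<longrightarrow> {take (Suc j) p ! i, take (Suc j) p ! Suc i} \<in> F"
    using assms unfolding is_path_def by (simp add: len)
  ultimately show ?thesis using ne len by (simp add: is_path_def plen_def)
qed

lemma is_path_drop: assumes "is_path F p u v" "j < length p"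
  shows "is_path F (drop j p) (p ! j) v \<and> plen (drop j p) = plen p - j"
proof -
  have ne: "drop j p \<noteq> []" using assms(2) by simp
  have "hd (drop j p) = p ! j" using assms(2) by (simp add: hd_drop_conv_nth)
  moreover have "last (drop j p) = v" using assms unfolding is_path_def by simp
  moreover have "\<forall>i. Suc i < length (drop j p) \<longrightarrow> {drop j p ! i, drop j p ! Suc i} \<in> F"
    using assms unfolding is_path_def by (simp add: add.commute)
  ultimately show ?thesis using ne by (simp add: is_path_def plen_def)
qed

lemma is_path_butlast: assumes "is_path F p u v" "last_edge_from p c"
  shows "is_path F (butlast p) u c \<and> plen (butlast p) + 1 = plen p \<and> {c, v} \<in> F"
proof -
  have L: "length p \<ge> 2" "p ! (length p - 2) = c" using assms(2) by (auto simp: last_edge_from_def)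
  have "Suc (length p - 2) = length p - 1" using L by arith
  then have bt: "butlast p = take (Suc (length p - 2)) p" by (simp add: butlast_conv_take)
  have "is_path F (take (Suc (length p - 2)) p) u (p ! (length p - 2)) \<and> plen (take (Suc (length p - 2)) p) = length p - 2"
    by (rule is_path_take[OF assms(1)]) (use L in auto)
  moreover have "{p ! (length p - 2), p ! Suc (length p - 2)} \<in> F"
  proof -
    have "Suc (length p - 2) < length p" using L by arith
    then show ?thesis using assms(1) unfolding is_path_def by blast
  qed
  moreover have "p ! Suc (length p - 2) = v"
  proof -
    have "Suc (length p - 2) = length p - 1" using L by arith
    moreover have "p \<noteq> []" "last p = v" using assms(1) unfolding is_path_def by auto
    ultimately show ?thesis by (simp add: last_conv_nth)
  qed
  ultimately show ?thesis using L bt by (simp add: plen_def)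
qed


definition conn :: "'a set set \<Rightarrow> 'a \<Rightarrow> 'a \<Rightarrow> int \<Rightarrow> bool" where
  "conn F u v k \<longleftrightarrow> (\<exists>q. is_path F q u v \<and> int (plen q) \<le> k)"

lemma conn_refl: "0 \<le> k \<Longrightarrow> conn F u u k"
  unfolding conn_def by (rule exI[of _ "[u]"]) (simp add: plen_def)

lemma conn_nonneg: "conn F u v k \<Longrightarrow> 0 \<le> k"
  unfolding conn_def by auto

lemma conn_trans: "conn F u v k1 \<Longrightarrow> conn F v w k2 \<Longrightarrow> conn F u w (k1 + k2)"
proof -
  assume "conn F u v k1" "conn F v w k2"
  then obtain p q where "is_path F p u v" "int (plen p) \<le> k1" "is_path F q v w" "int (plen q) \<le> k2"
    unfolding conn_def by blast
  with is_path_append[of F p u v q w] show ?thesis unfolding conn_def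
    by (intro exI[of _ "p @ tl q"]) simp
qed

lemma conn_sym: "conn F u v k \<Longrightarrow> conn F v u k"
proof -
  assume "conn F u v k"
  then obtain p where "is_path F p u v" "int (plen p) \<le> k" unfolding conn_def by blast
  then show ?thesis unfolding conn_def by (intro exI[of _ "rev p"]) (simp add: is_path_rev)
qed

lemma conn_mono: "conn F u v k \<Longrightarrow> F \<subseteq> F' \<Longrightarrow> k \<le> k' \<Longrightarrow> conn F' u v k'"
proof -
  assume "conn F u v k" "F \<subseteq> F'" "k \<le> k'"
  then obtain p where "is_path F p u v" "int (plen p) \<le> k" unfolding conn_def by blast
  then show ?thesis unfolding conn_def using \<open>F \<subseteq> F'\<close> \<open>k \<le> k'\<close>
    by (intro exI[of _ p]) (simp add: is_path_mono)
qed

lemma conn_edge: "{u, v} \<in> F \<Longrightarrow> conn F u v 1"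
proof -
  assume a: "{u, v} \<in> F"
  have "is_path F [u, v] u v" unfolding is_path_def
  proof (intro conjI allI impI)
    fix i assume "Suc i < length [u, v]"
    then have "i = 0" by simp
    then show "{[u, v] ! i, [u, v] ! Suc i} \<in> F" using a by simp
  qed simp_all
  then show ?thesis unfolding conn_def by (intro exI[of _ "[u, v]"]) (simp add: plen_def)
qed

lemma conn_path: "is_path F p u v \<Longrightarrow> conn F u v (int (plen p))"
  unfolding conn_def by auto

lemma gdist_le: "is_path F p u v \<Longrightarrow> gdist F u v \<le> enat (plen p)"
  unfolding gdist_def by (rule INF_lower) auto

lemma gdist_attained: assumes "gdist F u v \<noteq> \<infinity>"
  shows "\<exists>p. is_path F p u v \<and> gdist F u v = enat (plen p)"
proof -
  let ?S = "{p. is_path F p u v}"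
  let ?T = "(\<lambda>p. enat (plen p)) ` ?S"
  have ne: "?T \<noteq> {}"
  proof
    assume "?T = {}"
    then have "gdist F u v = Inf {}" unfolding gdist_def by simp
    then show False using assms by (simp add: Inf_enat_def)
  qed
  have "gdist F u v = Inf ?T" unfolding gdist_def by simp
  also have "\<dots> = (LEAST x. x \<in> ?T)" using ne unfolding Inf_enat_def by presburger
  finally have "gdist F u v = (LEAST x. x \<in> ?T)" .
  moreover have "(LEAST x. x \<in> ?T) \<in> ?T" using ne by (meson LeastI_ex ex_in_conv)
  ultimately show ?thesis by auto
qed

lemma conn_gdist: "conn F u v k \<Longrightarrow> gdist F u v \<noteq> \<infinity> \<and> int (the_enat (gdist F u v)) \<le> k"
proof -
  assume "conn F u v k"
  then obtain q where q: "is_path F q u v" "int (plen q) \<le> k" unfolding conn_def by auto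
  then have g: "gdist F u v \<le> enat (plen q)" by (intro gdist_le)
  then obtain n where n: "gdist F u v = enat n" "n \<le> plen q"
    by (cases "gdist F u v") auto
  then show ?thesis using q by simp
qed

lemma gdist_conn: "gdist F u v \<noteq> \<infinity> \<Longrightarrow> conn F u v (int (the_enat (gdist F u v)))"
  using gdist_attained unfolding conn_def by fastforce

lemma path_gdist: "is_path F p u v \<Longrightarrow> gdist F u v \<noteq> \<infinity> \<and> the_enat (gdist F u v) \<le> plen p"
  using conn_gdist[OF conn_path] by fastforce

lemma gdist_lower: "is_path F p u v \<Longrightarrow> the_enat (gdist F u v) \<le> plen p"
  using path_gdist by metis

lemma decomp:
  assumes "is_path F p u v" "e = {a, b}" "a \<noteq> b"
  shows "is_path (F - {e}) p u v \<or>
    (\<exists>y z k1 k2. y \<in> e \<and> z \<in> e \<and> conn (F - {e}) u y k1 \<and> conn (F - {e}) z v k2 \<and>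
        k1 + k2 + 1 \<le> int (plen p) \<and> (y = z \<longrightarrow> k1 + k2 + 2 \<le> int (plen p)))"
  using assms(1)
proof (induction p arbitrary: u)
  case Nil then show ?case by (simp add: is_path_def)
next
  case (Cons x p)
  show ?case
  proof (cases p)
    case Nil
    then show ?thesis using Cons.prems by (auto simp: is_path_def)
  next
    case (Cons y p')
    then have h: "x = u" "{x,y} \<in> F" "is_path F p y v" using Cons.prems is_path_Cons2 by fastforce+
    have pl: "plen (x # p) = plen p + 1" using Cons by (simp add: plen_def)
    note IH = Cons.IH[OF h(3)]
    show ?thesis
    proof (cases "{x, y} = e")
      case False
      then have ed: "{x,y} \<in> F - {e}" using h by auto
      show ?thesis
      proof (cases "is_path (F - {e}) p y v")
        case True
        then have "is_path (F - {e}) (x # p) u v" using Cons h ed is_path_Cons2 by fastforce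
        then show ?thesis by blast
      next
        case False
        then obtain y' z k1 k2 where d: "y' \<in> e" "z \<in> e" "conn (F - {e}) y y' k1" "conn (F - {e}) z v k2"
          "k1 + k2 + 1 \<le> int (plen p)" "y' = z \<longrightarrow> k1 + k2 + 2 \<le> int (plen p)" using IH by blast
        have "conn (F - {e}) u y' (1 + k1)" using conn_trans[OF conn_edge[OF ed] d(3)] h by simp
        then show ?thesis using d pl by (intro disjI2 exI[of _ y'] exI[of _ z] exI[of _ "1 + k1"] exI[of _ k2]) auto
      qed
    next
      case True
      then have xe: "x \<in> e" "y \<in> e" "x \<noteq> y" using assms(2,3) by (auto simp: doubleton_eq_iff)
      have c0: "conn (F - {e}) u x 0" using h by (simp add: conn_refl)
      show ?thesis
      proof (cases "is_path (F - {e}) p y v")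
        case True
        then have "conn (F - {e}) y v (int (plen p))" by (rule conn_path)
        then show ?thesis using xe c0 pl by (intro disjI2 exI[of _ x] exI[of _ y] exI[of _ 0] exI[of _ "int (plen p)"]) auto
      next
        case False
        then obtain y' z k1 k2 where d: "y' \<in> e" "z \<in> e" "conn (F - {e}) y y' k1" "conn (F - {e}) z v k2"
          "k1 + k2 + 1 \<le> int (plen p)" "y' = z \<longrightarrow> k1 + k2 + 2 \<le> int (plen p)" using IH by blast
        have "0 \<le> k1" using d(3) by (rule conn_nonneg)
        then show ?thesis using xe c0 pl d by (intro disjI2 exI[of _ x] exI[of _ z] exI[of _ 0] exI[of _ k2]) auto
      qed
    qed
  qed
qed



lemma graph_finite_E: "graph V E \<Longrightarrow> finite E"
proof -
  assume g: "graph V E"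
  then have "E \<subseteq> Pow V" unfolding graph_def by auto
  moreover have "finite (Pow V)" using g unfolding graph_def by simp
  ultimately show ?thesis by (rule finite_subset)
qed

lemma part1:
  assumes g: "graph V E" and cbs: "clustering_based_spanner V E A \<beta> \<C> cnt"
    and mu: "mult_EFT_spanner V E M \<alpha>" and out: "alg2_output E \<C> cnt M A H"
  shows "real (card H) \<le> 2 * real (card A + card M + card V + (card \<C>)\<^sup>2)"
proof -
  have finV: "finite V" using g unfolding graph_def by simp
  have finE: "finite E" using g by (rule graph_finite_E)
  have cl: "clustering V E \<C> cnt" using cbs unfolding clustering_based_spanner_def by simp
  have CV: "\<forall>X\<in>\<C>. X \<subseteq> V" using cl unfolding clustering_def by simp
  have finC: "finite \<C>" using CV finV by (meson Pow_iff finite_Pow_iff finite_subset subsetI)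
  obtain E' where E': "alg2_edges E \<C> cnt E'" and H: "H = E' \<union> M \<union> A" using out unfolding alg2_output_def by blast
  obtain S D where
    S: "\<forall>X\<in>\<C>. \<forall>v\<in>X.
         let cand = {{v, x} | x. x \<in> X - {cnt v} \<and> {v, x} \<in> E} in
         (cand = {} \<longrightarrow> S v = {}) \<and> (cand \<noteq> {} \<longrightarrow> (\<exists>e\<in>cand. S v = {e}))" and
    D: "\<forall>X\<in>\<C>. \<forall>Y\<in>\<C>. X \<noteq> Y \<longrightarrow> D X Y = D Y X \<and>
         (let \<delta> = delta E X Y in
          if (\<exists>e1\<in>\<delta>. \<exists>e2\<in>\<delta>. e1 \<inter> e2 = {})
          then (\<exists>e1\<in>\<delta>. \<exists>e2\<in>\<delta>. e1 \<inter> e2 = {} \<and> D X Y = {e1, e2})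
          else if (\<exists>e1\<in>\<delta>. \<exists>e2\<in>\<delta>. e1 \<noteq> e2)
          then (\<exists>e1\<in>\<delta>. \<exists>e2\<in>\<delta>. e1 \<noteq> e2 \<and> D X Y = {e1, e2})
          else D X Y = \<delta>)" and
    E'eq: "E' = (\<Union>X\<in>\<C>. \<Union>v\<in>X. S v) \<union> (\<Union>{D X Y | X Y. X \<in> \<C> \<and> Y \<in> \<C> \<and> X \<noteq> Y})"
    using E' unfolding alg2_edges_def by blast
  have S1: "card (S v) \<le> 1" if "X \<in> \<C>" "v \<in> X" for X v
  proof -
    have "let cand = {{v, x} | x. x \<in> X - {cnt v} \<and> {v, x} \<in> E} in
         (cand = {} \<longrightarrow> S v = {}) \<and> (cand \<noteq> {} \<longrightarrow> (\<exists>e\<in>cand. S v = {e}))" using S that by blast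
    then have "S v = {} \<or> (\<exists>e. S v = {e})" unfolding Let_def by blast
    then show ?thesis by auto
  qed
  have U1eq: "(\<Union>X\<in>\<C>. \<Union>v\<in>X. S v) = (\<Union>v\<in>\<Union>\<C>. S v)" by blast
  have finUC: "finite (\<Union>\<C>)" using CV finV by (meson Sup_le_iff finite_subset)
  have "card (\<Union>v\<in>\<Union>\<C>. S v) \<le> (\<Sum>v\<in>\<Union>\<C>. card (S v))" using finUC by (rule card_UN_le)
  also have "\<dots> \<le> (\<Sum>v\<in>\<Union>\<C>. 1)"
  proof (rule sum_mono)
    fix v assume "v \<in> \<Union>\<C>"
    then obtain X where "X \<in> \<C>" "v \<in> X" by blast
    then show "card (S v) \<le> 1" by (rule S1)
  qed
  also have "\<dots> = card (\<Union>\<C>)" by simp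
  also have "\<dots> \<le> card V" using CV by (intro card_mono[OF finV]) blast
  finally have c1': "card (\<Union>v\<in>\<Union>\<C>. S v) \<le> card V" .
  have c1: "card (\<Union>X\<in>\<C>. \<Union>v\<in>X. S v) \<le> card V" unfolding U1eq by (rule c1')
  have D2: "card (D X Y) \<le> 2" if "X \<in> \<C>" "Y \<in> \<C>" "X \<noteq> Y" for X Y
  proof -
    have finD: "finite (delta E X Y)" using finE unfolding delta_def by simp
    have "(\<exists>e1 e2. D X Y = {e1, e2}) \<or> (D X Y = delta E X Y \<and> \<not> (\<exists>e1\<in>delta E X Y. \<exists>e2\<in>delta E X Y. e1 \<noteq> e2))"
    proof -
      have "let \<delta> = delta E X Y in
          if (\<exists>e1\<in>\<delta>. \<exists>e2\<in>\<delta>. e1 \<inter> e2 = {})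
          then (\<exists>e1\<in>\<delta>. \<exists>e2\<in>\<delta>. e1 \<inter> e2 = {} \<and> D X Y = {e1, e2})
          else if (\<exists>e1\<in>\<delta>. \<exists>e2\<in>\<delta>. e1 \<noteq> e2)
          then (\<exists>e1\<in>\<delta>. \<exists>e2\<in>\<delta>. e1 \<noteq> e2 \<and> D X Y = {e1, e2})
          else D X Y = \<delta>" using D that by blast
      then have h: "if (\<exists>e1\<in>delta E X Y. \<exists>e2\<in>delta E X Y. e1 \<inter> e2 = {})
          then (\<exists>e1\<in>delta E X Y. \<exists>e2\<in>delta E X Y. e1 \<inter> e2 = {} \<and> D X Y = {e1, e2})
          else if (\<exists>e1\<in>delta E X Y. \<exists>e2\<in>delta E X Y. e1 \<noteq> e2)
          then (\<exists>e1\<in>delta E X Y. \<exists>e2\<in>delta E X Y. e1 \<noteq> e2 \<and> D X Y = {e1, e2})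
          else D X Y = delta E X Y" unfolding Let_def .
      show ?thesis
      proof (cases "\<exists>e1\<in>delta E X Y. \<exists>e2\<in>delta E X Y. e1 \<inter> e2 = {}")
        case True
        from h have "\<exists>e1\<in>delta E X Y. \<exists>e2\<in>delta E X Y. e1 \<inter> e2 = {} \<and> D X Y = {e1, e2}"
          by (simp only: if_P[OF True])
        then show ?thesis by blast
      next
        case F1: False
        show ?thesis
        proof (cases "\<exists>e1\<in>delta E X Y. \<exists>e2\<in>delta E X Y. e1 \<noteq> e2")
          case True
          from h have "\<exists>e1\<in>delta E X Y. \<exists>e2\<in>delta E X Y. e1 \<noteq> e2 \<and> D X Y = {e1, e2}"
            by (simp only: if_P[OF True] if_not_P[OF F1])
          then show ?thesis by blast
        next
          case False
          from h have "D X Y = delta E X Y"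
            by (simp only: if_not_P[OF False] if_not_P[OF F1])
          then show ?thesis using False by blast
        qed
      qed
    qed
    moreover have "card {e1, e2} \<le> 2" for e1 e2 :: "'a set" by (simp add: card_insert_le_m1)
    moreover have "card (delta E X Y) \<le> 1" if "\<not> (\<exists>e1\<in>delta E X Y. \<exists>e2\<in>delta E X Y. e1 \<noteq> e2)"
      using that finD card_le_Suc0_iff_eq[OF finD] by simp
    ultimately show ?thesis by fastforce
  qed
  let ?I = "{(X, Y). X \<in> \<C> \<and> Y \<in> \<C> \<and> X \<noteq> Y}"
  have U2eq: "\<Union>{D X Y | X Y. X \<in> \<C> \<and> Y \<in> \<C> \<and> X \<noteq> Y} = (\<Union>p\<in>?I. D (fst p) (snd p))"
  proof (intro equalityI subsetI)
    fix x assume "x \<in> \<Union>{D X Y | X Y. X \<in> \<C> \<and> Y \<in> \<C> \<and> X \<noteq> Y}"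
    then obtain X Y where "X \<in> \<C>" "Y \<in> \<C>" "X \<noteq> Y" "x \<in> D X Y" by blast
    then show "x \<in> (\<Union>p\<in>?I. D (fst p) (snd p))" by (intro UN_I[of "(X, Y)"]) auto
  next
    fix x assume "x \<in> (\<Union>p\<in>?I. D (fst p) (snd p))"
    then obtain X Y where "X \<in> \<C>" "Y \<in> \<C>" "X \<noteq> Y" "x \<in> D X Y" by auto
    then show "x \<in> \<Union>{D X Y | X Y. X \<in> \<C> \<and> Y \<in> \<C> \<and> X \<noteq> Y}" by blast
  qed
  have finI: "finite ?I" by (rule finite_subset[of _ "\<C> \<times> \<C>"]) (auto simp: finC)
  have "card (\<Union>p\<in>?I. D (fst p) (snd p)) \<le> (\<Sum>p\<in>?I. card (D (fst p) (snd p)))" using finI by (rule card_UN_le)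
  also have "\<dots> \<le> (\<Sum>p\<in>?I. 2)"
  proof (rule sum_mono)
    fix p assume "p \<in> ?I"
    then obtain X Y where "p = (X, Y)" "X \<in> \<C>" "Y \<in> \<C>" "X \<noteq> Y" by blast
    then show "card (D (fst p) (snd p)) \<le> 2" using D2 by simp
  qed
  also have "\<dots> = 2 * card ?I" by simp
  also have "card ?I \<le> card (\<C> \<times> \<C>)" using finC by (intro card_mono) auto
  then have "2 * card ?I \<le> 2 * (card \<C>)\<^sup>2" by (simp add: power2_eq_square card_cartesian_product)
  finally have c2: "card (\<Union>{D X Y | X Y. X \<in> \<C> \<and> Y \<in> \<C> \<and> X \<noteq> Y}) \<le> 2 * (card \<C>)\<^sup>2" using U2eq by simp
  have "card H \<le> card E' + card M + card A" unfolding H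
    by (meson add_le_mono card_Un_le le_refl order_trans)
  moreover have "card E' \<le> card V + 2 * (card \<C>)\<^sup>2" unfolding E'eq using c1 c2
    by (meson add_le_mono card_Un_le order_trans)
  ultimately have hh: "card H \<le> card A + card M + card V + 2 * (card \<C>)\<^sup>2" by linarith
  have "card A + card M + card V + 2 * (card \<C>)\<^sup>2 \<le> 2 * (card A + card M + card V + (card \<C>)\<^sup>2)" by simp
  then have "card H \<le> 2 * (card A + card M + card V + (card \<C>)\<^sup>2)" using hh by (rule le_trans[rotated])
  then have "real (card H) \<le> real (2 * (card A + card M + card V + (card \<C>)\<^sup>2))" by (simp only: of_nat_le_iff)
  then show ?thesis by simp
qed



lemma conn_le: "conn F u v k \<Longrightarrow> k \<le> k' \<Longrightarrow> conn F u v k'"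
  by (erule conn_mono) auto

locale L2 =
  fixes V :: "'a set" and E A M \<C> :: "'a set set" and cnt :: "'a \<Rightarrow> 'a" and \<alpha> :: real
    and \<beta> :: nat and H :: "'a set set" and e :: "'a set"
  assumes g: "graph V E" and cbs: "clustering_based_spanner V E A \<beta> \<C> cnt"
    and mu: "mult_EFT_spanner V E M \<alpha>" and out: "alg2_output E \<C> cnt M A H" and eE: "e \<in> E"
begin

definition d :: "'a \<Rightarrow> 'a \<Rightarrow> nat" where "d u v = the_enat (gdist E u v)"

abbreviation "Ae \<equiv> A - {e}"
abbreviation "Fe \<equiv> H - {e}"

definition TY :: "'a \<Rightarrow> 'a \<Rightarrow> bool" where
  "TY u x \<longleftrightarrow> conn Ae u x (int (d u x) + int \<beta> - 2) \<or>
     (conn Ae u (cnt x) (int (d u x) + int \<beta> - 1) \<and> (x = cnt x \<or> {cnt x, x} \<in> Ae))"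

definition NC :: "'a \<Rightarrow> 'a \<Rightarrow> bool" where
  "NC u x \<longleftrightarrow> conn Ae u x (int (d u x) + int \<beta>) \<and> (x \<in> \<Union>\<C> \<longrightarrow> TY u x)"

definition CR :: "'a \<Rightarrow> 'a \<Rightarrow> bool" where
  "CR u x \<longleftrightarrow> (\<exists>y z k1 k2. y \<in> e \<and> z \<in> e \<and> y \<noteq> z \<and> conn Ae u y k1 \<and> conn Ae z x k2 \<and>
      k1 + k2 + 1 \<le> int (d u x) + int \<beta>)"

lemma AE: "A \<subseteq> E" using cbs unfolding clustering_based_spanner_def additive_spanner_def by simp
lemma add: "gdist A u v \<le> gdist E u v + enat \<beta>"
  using cbs unfolding clustering_based_spanner_def additive_spanner_def by simp
lemma cl: "clustering V E \<C> cnt" using cbs unfolding clustering_based_spanner_def by simp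
lemma forced: "f \<in> E \<Longrightarrow> u \<in> f \<Longrightarrow> u \<notin> \<Union>\<C> \<Longrightarrow> f \<in> A"
  using cbs unfolding clustering_based_spanner_def by blast
lemma star: "v \<in> \<Union>\<C> \<Longrightarrow> v \<noteq> cnt v \<Longrightarrow> {v, cnt v} \<in> A"
  using cbs unfolding clustering_based_spanner_def by blast
lemma iii: "u \<in> V \<Longrightarrow> v \<in> \<Union>\<C> \<Longrightarrow> gdist E u v \<noteq> \<infinity> \<Longrightarrow>
        (\<exists>p. is_path A p u v \<and>
          (let d = int (the_enat (gdist E u v)); l = int (plen p) in
            l \<le> d + int \<beta> - 2
          \<or> (l = d + int \<beta> - 1 \<and> (v = cnt v \<or> last_edge_from p (cnt v)))
          \<or> (l = d + int \<beta> \<and> v \<noteq> cnt v \<and> last_edge_from p (cnt v))))"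
  using cbs unfolding clustering_based_spanner_def by blast

lemma e2: obtains a b where "e = {a, b}" "a \<noteq> b"
  using eE g unfolding graph_def by blast

lemma edgeV: "{x, y} \<in> E \<Longrightarrow> x \<in> V \<and> y \<in> V \<and> x \<noteq> y"
  using g unfolding graph_def by (auto simp: doubleton_eq_iff)

lemma HA: "A \<subseteq> H" and HM: "M \<subseteq> H" using out unfolding alg2_output_def by auto

lemma dec2:
  assumes p: "is_path A p u x" and l: "int (plen p) \<le> int (d u x) + int \<beta>"
  shows "is_path Ae p u x \<or> conn Ae u x (int (d u x) + int \<beta> - 2) \<or> CR u x"
proof -
  obtain a b where ab: "e = {a, b}" "a \<noteq> b" by (rule e2)
  from decomp[OF p ab] show ?thesis
  proof
    assume "is_path Ae p u x" then show ?thesis by blast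
  next
    assume "\<exists>y z k1 k2. y \<in> e \<and> z \<in> e \<and> conn Ae u y k1 \<and> conn Ae z x k2 \<and>
        k1 + k2 + 1 \<le> int (plen p) \<and> (y = z \<longrightarrow> k1 + k2 + 2 \<le> int (plen p))"
    then obtain y z k1 k2 where h: "y \<in> e" "z \<in> e" "conn Ae u y k1" "conn Ae z x k2"
        "k1 + k2 + 1 \<le> int (plen p)" "y = z \<longrightarrow> k1 + k2 + 2 \<le> int (plen p)" by blast
    show ?thesis
    proof (cases "y = z")
      case True
      then have "conn Ae u x (k1 + k2)" using h conn_trans by metis
      then have "conn Ae u x (int (d u x) + int \<beta> - 2)" by (rule conn_mono) (use h True l in auto)
      then show ?thesis by blast
    next
      case False
      then have "CR u x" unfolding CR_def using h l by (intro exI[of _ y] exI[of _ z] exI[of _ k1] exI[of _ k2]) auto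
      then show ?thesis by blast
    qed
  qed
qed

lemma side:
  assumes uV: "u \<in> V" and xV: "x \<in> V" and fin: "gdist E u x \<noteq> \<infinity>"
  shows "NC u x \<or> CR u x"
proof (cases "x \<in> \<Union>\<C>")
  case True
  obtain p where p: "is_path A p u x" and
    c: "int (plen p) \<le> int (d u x) + int \<beta> - 2
          \<or> (int (plen p) = int (d u x) + int \<beta> - 1 \<and> (x = cnt x \<or> last_edge_from p (cnt x)))
          \<or> (int (plen p) = int (d u x) + int \<beta> \<and> x \<noteq> cnt x \<and> last_edge_from p (cnt x))"
    using iii[OF uV True fin] unfolding Let_def d_def by blast
  have l: "int (plen p) \<le> int (d u x) + int \<beta>" using c by linarith
  from dec2[OF p l] consider "is_path Ae p u x" | "conn Ae u x (int (d u x) + int \<beta> - 2)" | "CR u x" by blast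
  then show ?thesis
  proof cases
    case 1
    have cn: "conn Ae u x (int (d u x) + int \<beta>)" by (rule conn_le[OF conn_path[OF 1] l])
    have "TY u x"
    proof -
      consider "int (plen p) \<le> int (d u x) + int \<beta> - 2"
        | "int (plen p) \<le> int (d u x) + int \<beta> - 1" "x = cnt x"
        | "int (plen p) \<le> int (d u x) + int \<beta>" "last_edge_from p (cnt x)"
        using c by linarith
      then show ?thesis
      proof cases
        case 1
        then show ?thesis unfolding TY_def using conn_le[OF conn_path[OF \<open>is_path Ae p u x\<close>]] by blast
      next
        case 2
        then have "conn Ae u (cnt x) (int (d u x) + int \<beta> - 1)"
          using conn_le[OF conn_path[OF \<open>is_path Ae p u x\<close>]] by simp
        then show ?thesis unfolding TY_def using 2 by blast
      next
        case 3
        from is_path_butlast[OF \<open>is_path Ae p u x\<close> 3(2)]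
        have b: "is_path Ae (butlast p) u (cnt x)" "plen (butlast p) + 1 = plen p" "{cnt x, x} \<in> Ae" by auto
        have "conn Ae u (cnt x) (int (d u x) + int \<beta> - 1)"
          using b(2) 3(1) by (intro conn_le[OF conn_path[OF b(1)]]) linarith
        then show ?thesis unfolding TY_def using b(3) by blast
      qed
    qed
    then show ?thesis unfolding NC_def using cn by blast
  next
    case 2
    then have "conn Ae u x (int (d u x) + int \<beta>)" by (rule conn_mono) auto
    then show ?thesis unfolding NC_def TY_def using 2 by blast
  next
    case 3 then show ?thesis by blast
  qed
next
  case False
  have "gdist A u x \<le> gdist E u x + enat \<beta>" by (rule add)
  moreover obtain n where n: "gdist E u x = enat n" using fin by (cases "gdist E u x") auto
  ultimately obtain m where m: "gdist A u x = enat m" "m \<le> n + \<beta>" by (cases "gdist A u x") auto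
  then have finA: "gdist A u x \<noteq> \<infinity>" and le: "the_enat (gdist A u x) \<le> d u x + \<beta>"
    using n unfolding d_def by auto
  obtain p where p: "is_path A p u x" "gdist A u x = enat (plen p)" using gdist_attained[OF finA] by blast
  have l: "int (plen p) \<le> int (d u x) + int \<beta>" using le p(2) by simp
  from dec2[OF p(1) l] consider "is_path Ae p u x" | "conn Ae u x (int (d u x) + int \<beta> - 2)" | "CR u x" by blast
  then show ?thesis
  proof cases
    case 1
    have "conn Ae u x (int (d u x) + int \<beta>)" by (rule conn_le[OF conn_path[OF 1] l])
    then show ?thesis unfolding NC_def using False by blast
  next
    case 2
    then have "conn Ae u x (int (d u x) + int \<beta>)" by (rule conn_mono) auto
    then show ?thesis unfolding NC_def using False by blast
  next
    case 3 then show ?thesis by blast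
  qed
qed

lemma good_both:
  assumes "CR s x" "CR t x"
  shows "conn Ae s t (int (d s x) + int (d t x) + 2 * int \<beta> - 2)"
proof -
  obtain a b where ab: "e = {a, b}" "a \<noteq> b" by (rule e2)
  obtain y1 z1 k1 k2 where h1: "y1 \<in> e" "z1 \<in> e" "y1 \<noteq> z1" "conn Ae s y1 k1" "conn Ae z1 x k2"
      "k1 + k2 + 1 \<le> int (d s x) + int \<beta>" using assms(1) unfolding CR_def by blast
  obtain y2 z2 k3 k4 where h2: "y2 \<in> e" "z2 \<in> e" "y2 \<noteq> z2" "conn Ae t y2 k3" "conn Ae z2 x k4"
      "k3 + k4 + 1 \<le> int (d t x) + int \<beta>" using assms(2) unfolding CR_def by blast
  have nn: "0 \<le> k2" "0 \<le> k4" using conn_nonneg[OF h1(5)] conn_nonneg[OF h2(5)] by auto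
  show ?thesis
  proof (cases "y1 = y2")
    case True
    have "conn Ae s y2 k1" using h1(4) True by simp
    then have "conn Ae s t (k1 + k3)" using conn_sym[OF h2(4)] by (rule conn_trans)
    then show ?thesis by (rule conn_le) (use h1 h2 nn in linarith)
  next
    case False
    then have eq: "y1 = z2" "z1 = y2" using h1(1-3) h2(1-3) ab by auto
    have "conn Ae y1 x k4" using h2(5) eq by simp
    then have "conn Ae s x (k1 + k4)" by (rule conn_trans[OF h1(4)])
    moreover have "conn Ae y2 x k2" using h1(5) eq by simp
    then have "conn Ae x t (k2 + k3)" by (rule conn_trans[OF conn_sym conn_sym[OF h2(4)]])
    ultimately have "conn Ae s t (k1 + k4 + (k2 + k3))" by (rule conn_trans)
    then show ?thesis by (rule conn_le) (use h1 h2 in linarith)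
  qed
qed

lemma d_refl: "d s s = 0"
proof -
  have "the_enat (gdist E s s) \<le> plen [s]" by (rule gdist_lower) simp
  then show ?thesis unfolding d_def by (simp add: plen_def)
qed

lemma beta_self: assumes "s \<in> V" "s \<in> \<Union>\<C>" shows "\<beta> \<ge> 2 \<or> (\<beta> \<ge> 1 \<and> s = cnt s)"
proof -
  have fin: "gdist E s s \<noteq> \<infinity>" using path_gdist[of E "[s]" s s] by simp
  obtain p where p: "is_path A p s s" and
    c: "int (plen p) \<le> int (d s s) + int \<beta> - 2
          \<or> (int (plen p) = int (d s s) + int \<beta> - 1 \<and> (s = cnt s \<or> last_edge_from p (cnt s)))
          \<or> (int (plen p) = int (d s s) + int \<beta> \<and> s \<noteq> cnt s \<and> last_edge_from p (cnt s))"
    using iii[OF assms fin] unfolding Let_def d_def by blast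
  have le2: "last_edge_from p (cnt s) \<Longrightarrow> plen p \<ge> 1" unfolding last_edge_from_def plen_def by auto
  have le3: "last_edge_from p (cnt s) \<Longrightarrow> s \<noteq> cnt s \<Longrightarrow> plen p \<ge> 2"
  proof -
    assume l: "last_edge_from p (cnt s)" "s \<noteq> cnt s"
    have "p \<noteq> []" "hd p = s" using p unfolding is_path_def by auto
    moreover have "length p \<ge> 2" "p ! (length p - 2) = cnt s" using l unfolding last_edge_from_def by auto
    ultimately have "length p \<noteq> 2" using l(2) by (auto simp: hd_conv_nth)
    then show "plen p \<ge> 2" using \<open>length p \<ge> 2\<close> unfolding plen_def by simp
  qed
  show ?thesis using c le2 le3 d_refl by auto
qed

lemma NC_self: assumes "s \<in> V" shows "NC s s"
proof -
  have "conn Ae s s (int (d s s) + int \<beta>)" by (rule conn_refl) simp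
  moreover have "TY s s" if "s \<in> \<Union>\<C>"
  proof -
    from beta_self[OF assms that] show ?thesis
    proof
      assume "\<beta> \<ge> 2"
      then have "conn Ae s s (int (d s s) + int \<beta> - 2)" by (intro conn_refl) simp
      then show ?thesis unfolding TY_def by blast
    next
      assume h: "\<beta> \<ge> 1 \<and> s = cnt s"
      then have "conn Ae s (cnt s) (int (d s s) + int \<beta> - 1)" by (metis conn_refl d_refl of_nat_0 add_0 of_nat_1 of_nat_le_iff diff_ge_0_iff_ge)
      then show ?thesis unfolding TY_def using h by blast
    qed
  qed
  ultimately show ?thesis unfolding NC_def by blast
qed

lemma two_routes:
  assumes "y1 \<in> X" "y2 \<in> X" "y1' \<in> X'" "y2' \<in> X'" "c \<in> X" "c' \<in> X'" "X \<inter> X' = {}"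
    "{y1, y1'} \<noteq> {y2, y2'}"
    "\<not> ({y1, y1'} \<noteq> f \<and> (y1 = c \<or> {y1, c} \<noteq> f) \<and> (y1' = c' \<or> {y1', c'} \<noteq> f))"
    "\<not> ({y2, y2'} \<noteq> f \<and> (y2 = c \<or> {y2, c} \<noteq> f) \<and> (y2' = c' \<or> {y2', c'} \<noteq> f))"
  shows "(y1 = y2 \<and> y1 \<noteq> c \<and> f = {y1, c}) \<or> (y1' = y2' \<and> y1' \<noteq> c' \<and> f = {y1', c'})"
proof -
  have n: "y1 \<notin> X'" "y2 \<notin> X'" "c \<notin> X'" "y1' \<notin> X" "y2' \<notin> X" "c' \<notin> X" using assms(1-7) by blast+
  have m: "{p, q} = {r, w} \<Longrightarrow> p \<in> {r, w} \<and> q \<in> {r, w}" for p q r w :: 'a by blast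
  have c1: "f = {y1, y1'} \<or> (y1 \<noteq> c \<and> f = {y1, c}) \<or> (y1' \<noteq> c' \<and> f = {y1', c'})" using assms(9) by blast
  have c2: "f = {y2, y2'} \<or> (y2 \<noteq> c \<and> f = {y2, c}) \<or> (y2' \<noteq> c' \<and> f = {y2', c'})" using assms(10) by blast
  from c1 show ?thesis
  proof (elim disjE conjE)
    assume f1: "f = {y1, y1'}"
    from c2 show ?thesis
    proof (elim disjE conjE)
      assume "f = {y2, y2'}" then show ?thesis using f1 assms(8) by simp
    next
      assume h: "f = {y2, c}"
      have "y1' \<in> f" using f1 by simp
      then have "y1' \<in> {y2, c}" using h by simp
      then show ?thesis using n assms(2,5) by auto
    next
      assume h: "f = {y2', c'}"
      have "y1 \<in> f" using f1 by simp
      then have "y1 \<in> {y2', c'}" using h by simp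
      then show ?thesis using n assms(4,6) by auto
    qed
  next
    assume f1: "y1 \<noteq> c" "f = {y1, c}"
    from c2 show ?thesis
    proof (elim disjE conjE)
      assume h: "f = {y2, y2'}"
      have "y2' \<in> f" using h by simp
      then have "y2' \<in> {y1, c}" using f1 by simp
      then show ?thesis using n assms(1,5) by auto
    next
      assume "y2 \<noteq> c" "f = {y2, c}" then have "y1 = y2" using f1 by (auto simp: doubleton_eq_iff)
      then show ?thesis using f1 by simp
    next
      assume h: "f = {y2', c'}"
      have "c \<in> f" using f1 by simp
      then have "c \<in> {y2', c'}" using h by simp
      then show ?thesis using n assms(4,6) by auto
    qed
  next
    assume f1: "y1' \<noteq> c'" "f = {y1', c'}"
    from c2 show ?thesis
    proof (elim disjE conjE)
      assume h: "f = {y2, y2'}"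
      have "y2 \<in> f" using h by simp
      then have "y2 \<in> {y1', c'}" using f1 by simp
      then show ?thesis using n assms(3,6) by auto
    next
      assume h: "f = {y2, c}"
      have "c' \<in> f" using f1 by simp
      then have "c' \<in> {y2, c}" using h by simp
      then show ?thesis using n assms(2,5) by auto
    next
      assume "y2' \<noteq> c'" "f = {y2', c'}" then have "y1' = y2'" using f1 by (auto simp: doubleton_eq_iff)
      then show ?thesis using f1 by simp
    qed
  qed
qed

lemma Dinfo:
  obtains D where "\<And>X Y. X \<in> \<C> \<Longrightarrow> Y \<in> \<C> \<Longrightarrow> X \<noteq> Y \<Longrightarrow> D X Y \<subseteq> H \<and>
     ((\<exists>e1\<in>delta E X Y. \<exists>e2\<in>delta E X Y. e1 \<inter> e2 = {} \<and> D X Y = {e1, e2}) \<or>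
      (\<not> (\<exists>e1\<in>delta E X Y. \<exists>e2\<in>delta E X Y. e1 \<inter> e2 = {}) \<and>
         (\<exists>e1\<in>delta E X Y. \<exists>e2\<in>delta E X Y. e1 \<noteq> e2 \<and> D X Y = {e1, e2})) \<or>
      (\<not> (\<exists>e1\<in>delta E X Y. \<exists>e2\<in>delta E X Y. e1 \<inter> e2 = {}) \<and>
         \<not> (\<exists>e1\<in>delta E X Y. \<exists>e2\<in>delta E X Y. e1 \<noteq> e2) \<and> D X Y = delta E X Y))"
proof -
  obtain E' where E': "alg2_edges E \<C> cnt E'" and H: "H = E' \<union> M \<union> A" using out unfolding alg2_output_def by blast
  obtain S D where
    D: "\<forall>X\<in>\<C>. \<forall>Y\<in>\<C>. X \<noteq> Y \<longrightarrow> D X Y = D Y X \<and>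
         (let \<delta> = delta E X Y in
          if (\<exists>e1\<in>\<delta>. \<exists>e2\<in>\<delta>. e1 \<inter> e2 = {})
          then (\<exists>e1\<in>\<delta>. \<exists>e2\<in>\<delta>. e1 \<inter> e2 = {} \<and> D X Y = {e1, e2})
          else if (\<exists>e1\<in>\<delta>. \<exists>e2\<in>\<delta>. e1 \<noteq> e2)
          then (\<exists>e1\<in>\<delta>. \<exists>e2\<in>\<delta>. e1 \<noteq> e2 \<and> D X Y = {e1, e2})
          else D X Y = \<delta>)" and
    E'eq: "E' = (\<Union>X\<in>\<C>. \<Union>v\<in>X. S v) \<union> (\<Union>{D X Y | X Y. X \<in> \<C> \<and> Y \<in> \<C> \<and> X \<noteq> Y})"
    using E' unfolding alg2_edges_def by blast
  show ?thesis
  proof (rule that[of D])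
    fix X Y assume XY: "X \<in> \<C>" "Y \<in> \<C>" "X \<noteq> Y"
    have sub: "D X Y \<subseteq> H" unfolding H E'eq using XY by blast
    have "let \<delta> = delta E X Y in
          if (\<exists>e1\<in>\<delta>. \<exists>e2\<in>\<delta>. e1 \<inter> e2 = {})
          then (\<exists>e1\<in>\<delta>. \<exists>e2\<in>\<delta>. e1 \<inter> e2 = {} \<and> D X Y = {e1, e2})
          else if (\<exists>e1\<in>\<delta>. \<exists>e2\<in>\<delta>. e1 \<noteq> e2)
          then (\<exists>e1\<in>\<delta>. \<exists>e2\<in>\<delta>. e1 \<noteq> e2 \<and> D X Y = {e1, e2})
          else D X Y = \<delta>" using D XY by blast
    then have h: "if (\<exists>e1\<in>delta E X Y. \<exists>e2\<in>delta E X Y. e1 \<inter> e2 = {})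
          then (\<exists>e1\<in>delta E X Y. \<exists>e2\<in>delta E X Y. e1 \<inter> e2 = {} \<and> D X Y = {e1, e2})
          else if (\<exists>e1\<in>delta E X Y. \<exists>e2\<in>delta E X Y. e1 \<noteq> e2)
          then (\<exists>e1\<in>delta E X Y. \<exists>e2\<in>delta E X Y. e1 \<noteq> e2 \<and> D X Y = {e1, e2})
          else D X Y = delta E X Y" unfolding Let_def .
    show "D X Y \<subseteq> H \<and>
     ((\<exists>e1\<in>delta E X Y. \<exists>e2\<in>delta E X Y. e1 \<inter> e2 = {} \<and> D X Y = {e1, e2}) \<or>
      (\<not> (\<exists>e1\<in>delta E X Y. \<exists>e2\<in>delta E X Y. e1 \<inter> e2 = {}) \<and>
         (\<exists>e1\<in>delta E X Y. \<exists>e2\<in>delta E X Y. e1 \<noteq> e2 \<and> D X Y = {e1, e2})) \<or>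
      (\<not> (\<exists>e1\<in>delta E X Y. \<exists>e2\<in>delta E X Y. e1 \<inter> e2 = {}) \<and>
         \<not> (\<exists>e1\<in>delta E X Y. \<exists>e2\<in>delta E X Y. e1 \<noteq> e2) \<and> D X Y = delta E X Y))"
    proof (cases "\<exists>e1\<in>delta E X Y. \<exists>e2\<in>delta E X Y. e1 \<inter> e2 = {}")
      case True
      from h have "\<exists>e1\<in>delta E X Y. \<exists>e2\<in>delta E X Y. e1 \<inter> e2 = {} \<and> D X Y = {e1, e2}"
        by (simp only: if_P[OF True])
      then show ?thesis using sub by blast
    next
      case F1: False
      show ?thesis
      proof (cases "\<exists>e1\<in>delta E X Y. \<exists>e2\<in>delta E X Y. e1 \<noteq> e2")
        case True
        from h have "\<exists>e1\<in>delta E X Y. \<exists>e2\<in>delta E X Y. e1 \<noteq> e2 \<and> D X Y = {e1, e2}"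
          by (simp only: if_P[OF True] if_not_P[OF F1])
        then show ?thesis using sub F1 by blast
      next
        case False
        from h have "D X Y = delta E X Y"
          by (simp only: if_not_P[OF False] if_not_P[OF F1])
        then show ?thesis using sub F1 False by blast
      qed
    qed
  qed
qed

lemma cl_all: "(\<forall>X\<in>\<C>. X \<noteq> {} \<and> X \<subseteq> V) \<and>
     (\<forall>X\<in>\<C>. \<forall>Y\<in>\<C>. X \<noteq> Y \<longrightarrow> X \<inter> Y = {}) \<and>
     (\<forall>X\<in>\<C>. \<forall>v\<in>X. cnt v \<in> X) \<and>
     (\<forall>X\<in>\<C>. \<forall>u\<in>X. \<forall>v\<in>X. cnt u = cnt v) \<and>
     (\<forall>v\<in>\<Union>\<C>. v \<noteq> cnt v \<longrightarrow> {v, cnt v} \<in> E)"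
  using cl unfolding clustering_def .

lemma cin: "X \<in> \<C> \<Longrightarrow> v \<in> X \<Longrightarrow> cnt v \<in> X"
proof -
  assume a: "X \<in> \<C>" "v \<in> X"
  have "\<forall>X\<in>\<C>. \<forall>v\<in>X. cnt v \<in> X" by (rule conjunct1[OF conjunct2[OF conjunct2[OF cl_all]]])
  then show ?thesis using a by simp
qed
lemma csame: "X \<in> \<C> \<Longrightarrow> u \<in> X \<Longrightarrow> v \<in> X \<Longrightarrow> cnt u = cnt v"
proof -
  assume a: "X \<in> \<C>" "u \<in> X" "v \<in> X"
  have "\<forall>X\<in>\<C>. \<forall>u\<in>X. \<forall>v\<in>X. cnt u = cnt v" by (rule conjunct1[OF conjunct2[OF conjunct2[OF conjunct2[OF cl_all]]]])
  then show ?thesis using a by blast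
qed
lemma cdisj: "X \<in> \<C> \<Longrightarrow> Y \<in> \<C> \<Longrightarrow> X \<noteq> Y \<Longrightarrow> X \<inter> Y = {}"
proof -
  assume a: "X \<in> \<C>" "Y \<in> \<C>" "X \<noteq> Y"
  have "\<forall>X\<in>\<C>. \<forall>Y\<in>\<C>. X \<noteq> Y \<longrightarrow> X \<inter> Y = {}" by (rule conjunct1[OF conjunct2[OF cl_all]])
  then show ?thesis using a by simp
qed

lemma delta_elem: "f \<in> delta E X Y \<Longrightarrow> \<exists>y\<in>X. \<exists>y'\<in>Y. f = {y, y'}"
  unfolding delta_def by blast

lemma to_center: assumes "X \<in> \<C>" "y \<in> X" "y = cnt y \<or> {y, cnt y} \<noteq> e"
  shows "conn Fe (cnt y) y 1"
proof (cases "y = cnt y")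
  case True
  have "conn Fe y y 1" by (rule conn_refl) simp
  then show ?thesis using True by simp
next
  case False
  have yU: "y \<in> \<Union>\<C>" using assms(1,2) by blast
  have "{y, cnt y} \<in> A" by (rule star[OF yU False])
  then have "{y, cnt y} \<in> H" using HA by (rule subsetD[rotated])
  moreover have "{y, cnt y} \<noteq> e" using assms(3) False by simp
  ultimately have "{y, cnt y} \<in> Fe" by simp
  then have "conn Fe y (cnt y) 1" by (rule conn_edge)
  then show ?thesis by (rule conn_sym)
qed

lemma cc:
  assumes X: "X \<in> \<C>" "x \<in> X" and X': "X' \<in> \<C>" "x' \<in> X'" and xe: "{x, x'} \<in> E" "{x, x'} \<noteq> e"
    and hx: "x = cnt x \<or> {cnt x, x} \<in> Ae" and hx': "x' = cnt x' \<or> {cnt x', x'} \<in> Ae"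
  shows "conn Fe (cnt x) (cnt x') 3"
proof (cases "X = X'")
  case True
  then have "cnt x = cnt x'" using csame X X' by blast
  then show ?thesis by (simp add: conn_refl)
next
  case XX: False
  define c where "c = cnt x"
  define c' where "c' = cnt x'"
  have cX: "c \<in> X" "c' \<in> X'" unfolding c_def c'_def using cin X X' by auto
  have dj: "X \<inter> X' = {}" using cdisj X(1) X'(1) XX by blast
  have route: "conn Fe c c' 3" if f: "f \<in> H" "f = {y, y'}" "y \<in> X" "y' \<in> X'" "f \<noteq> e"
      "y = c \<or> {y, c} \<noteq> e" "y' = c' \<or> {y', c'} \<noteq> e" for f y y'
  proof -
    have "cnt y = c" unfolding c_def using csame X f(3) by blast
    then have 1: "conn Fe c y 1" using to_center[OF X(1) f(3)] f(6) by auto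
    have "cnt y' = c'" unfolding c'_def using csame X' f(4) by blast
    then have 3: "conn Fe y' c' 1" using to_center[OF X'(1) f(4)] f(7) conn_sym by metis
    have 2: "conn Fe y y' 1" using f(1,2,5) by (intro conn_edge) blast
    have "conn Fe c c' (1 + 1 + 1)" by (rule conn_trans[OF conn_trans[OF 1 2] 3])
    then show ?thesis by simp
  qed
  have xd: "{x, x'} \<in> delta E X X'" unfolding delta_def using xe X X' by blast
  have hxc: "x = c \<or> {x, c} \<noteq> e" using hx unfolding c_def by (auto simp: insert_commute)
  have hxc': "x' = c' \<or> {x', c'} \<noteq> e" using hx' unfolding c'_def by (auto simp: insert_commute)
  obtain D where Dp: "\<And>X Y. X \<in> \<C> \<Longrightarrow> Y \<in> \<C> \<Longrightarrow> X \<noteq> Y \<Longrightarrow> D X Y \<subseteq> H \<and>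
     ((\<exists>e1\<in>delta E X Y. \<exists>e2\<in>delta E X Y. e1 \<inter> e2 = {} \<and> D X Y = {e1, e2}) \<or>
      (\<not> (\<exists>e1\<in>delta E X Y. \<exists>e2\<in>delta E X Y. e1 \<inter> e2 = {}) \<and>
         (\<exists>e1\<in>delta E X Y. \<exists>e2\<in>delta E X Y. e1 \<noteq> e2 \<and> D X Y = {e1, e2})) \<or>
      (\<not> (\<exists>e1\<in>delta E X Y. \<exists>e2\<in>delta E X Y. e1 \<inter> e2 = {}) \<and>
         \<not> (\<exists>e1\<in>delta E X Y. \<exists>e2\<in>delta E X Y. e1 \<noteq> e2) \<and> D X Y = delta E X Y))"
    by (rule Dinfo) blast
  note DD = Dp[OF X(1) X'(1) XX]
  have DH: "D X X' \<subseteq> H" using DD by blast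
  have bothfail: "\<exists>y1 y2 y1' y2'. y1 \<in> X \<and> y2 \<in> X \<and> y1' \<in> X' \<and> y2' \<in> X' \<and> e1 = {y1, y1'} \<and> e2 = {y2, y2'} \<and>
        ((y1 = y2 \<and> y1 \<noteq> c \<and> e = {y1, c}) \<or> (y1' = y2' \<and> y1' \<noteq> c' \<and> e = {y1', c'}))"
    if e12: "e1 \<in> delta E X X'" "e2 \<in> delta E X X'" "e1 \<noteq> e2" "D X X' = {e1, e2}"
      and nc: "\<not> conn Fe c c' 3" for e1 e2
  proof -
    obtain y1 y1' where y1: "y1 \<in> X" "y1' \<in> X'" "e1 = {y1, y1'}" using delta_elem[OF e12(1)] by blast
    obtain y2 y2' where y2: "y2 \<in> X" "y2' \<in> X'" "e2 = {y2, y2'}" using delta_elem[OF e12(2)] by blast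
    have H1: "e1 \<in> H" "e2 \<in> H" using DH e12(4) by auto
    have n1: "\<not> ({y1, y1'} \<noteq> e \<and> (y1 = c \<or> {y1, c} \<noteq> e) \<and> (y1' = c' \<or> {y1', c'} \<noteq> e))"
    proof
      assume "{y1, y1'} \<noteq> e \<and> (y1 = c \<or> {y1, c} \<noteq> e) \<and> (y1' = c' \<or> {y1', c'} \<noteq> e)"
      then have "conn Fe c c' 3" using route[OF H1(1) y1(3) y1(1) y1(2)] y1(3) by blast
      then show False using nc by blast
    qed
    have n2: "\<not> ({y2, y2'} \<noteq> e \<and> (y2 = c \<or> {y2, c} \<noteq> e) \<and> (y2' = c' \<or> {y2', c'} \<noteq> e))"
    proof
      assume "{y2, y2'} \<noteq> e \<and> (y2 = c \<or> {y2, c} \<noteq> e) \<and> (y2' = c' \<or> {y2', c'} \<noteq> e)"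
      then have "conn Fe c c' 3" using route[OF H1(2) y2(3) y2(1) y2(2)] y2(3) by blast
      then show False using nc by blast
    qed
    have ne: "{y1, y1'} \<noteq> {y2, y2'}" using e12(3) y1(3) y2(3) by simp
    have "(y1 = y2 \<and> y1 \<noteq> c \<and> e = {y1, c}) \<or> (y1' = y2' \<and> y1' \<noteq> c' \<and> e = {y1', c'})"
      by (rule two_routes[OF y1(1) y2(1) y1(2) y2(2) cX dj ne n1 n2])
    then show ?thesis using y1 y2 by blast
  qed
  from DD show ?thesis
  proof (elim conjE disjE)
    assume "\<exists>e1\<in>delta E X X'. \<exists>e2\<in>delta E X X'. e1 \<inter> e2 = {} \<and> D X X' = {e1, e2}"
    then obtain e1 e2 where h: "e1 \<in> delta E X X'" "e2 \<in> delta E X X'" "e1 \<inter> e2 = {}" "D X X' = {e1, e2}" by blast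
    show "conn Fe (cnt x) (cnt x') 3" unfolding c_def[symmetric] c'_def[symmetric]
    proof (rule ccontr)
      assume nc: "\<not> conn Fe c c' 3"
      have "e1 \<noteq> {}" using delta_elem[OF h(1)] by blast
      then have "e1 \<noteq> e2" using h(3) by blast
      from bothfail[OF h(1,2) this h(4) nc] obtain y1 y2 y1' y2' where
        "e1 = {y1, y1'}" "e2 = {y2, y2'}" "y1 = y2 \<or> y1' = y2'" by blast
      then show False using h(3) by blast
    qed
  next
    assume nd: "\<not> (\<exists>e1\<in>delta E X X'. \<exists>e2\<in>delta E X X'. e1 \<inter> e2 = {})"
      and "\<exists>e1\<in>delta E X X'. \<exists>e2\<in>delta E X X'. e1 \<noteq> e2 \<and> D X X' = {e1, e2}"
    then obtain e1 e2 where h: "e1 \<in> delta E X X'" "e2 \<in> delta E X X'" "e1 \<noteq> e2" "D X X' = {e1, e2}" by blast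
    show "conn Fe (cnt x) (cnt x') 3" unfolding c_def[symmetric] c'_def[symmetric]
    proof (rule ccontr)
      assume nc: "\<not> conn Fe c c' 3"
      from bothfail[OF h(1,2,3,4) nc] obtain y1 y2 y1' y2' where
        y: "y1 \<in> X" "y2 \<in> X" "y1' \<in> X'" "y2' \<in> X'" "e1 = {y1, y1'}" "e2 = {y2, y2'}" and
        cs: "(y1 = y2 \<and> y1 \<noteq> c \<and> e = {y1, c}) \<or> (y1' = y2' \<and> y1' \<noteq> c' \<and> e = {y1', c'})" by blast
      have i1: "{x, x'} \<inter> e1 \<noteq> {}" using nd xd h(1) by blast
      have i2: "{x, x'} \<inter> e2 \<noteq> {}" using nd xd h(2) by blast
      have j1: "x \<in> e1 \<or> x' \<in> e1" using i1 by blast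
      have j2: "x \<in> e2 \<or> x' \<in> e2" using i2 by blast
      have nX: "x \<notin> X'" "x' \<notin> X" "y1 \<notin> X'" "y2 \<notin> X'" "y1' \<notin> X" "y2' \<notin> X"
        using dj X(2) X'(2) y by blast+
      from cs show False
      proof
        assume a: "y1 = y2 \<and> y1 \<noteq> c \<and> e = {y1, c}"
        have "x = y1"
        proof (rule ccontr)
          assume "x \<noteq> y1"
          have "x \<noteq> y1'" "x \<noteq> y2'" "x' \<noteq> y1" "x' \<noteq> y2" using nX X(2) X'(2) y(1-4) by metis+
          then have "x' = y1'" "x' = y2'" using j1 j2 y(5,6) a \<open>x \<noteq> y1\<close> by auto
          then show False using h(3) y(5,6) a by simp
        qed
        then show False using hxc a by auto
      next
        assume a: "y1' = y2' \<and> y1' \<noteq> c' \<and> e = {y1', c'}"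
        have "x' = y1'"
        proof (rule ccontr)
          assume "x' \<noteq> y1'"
          have "x \<noteq> y1'" "x \<noteq> y2'" "x' \<noteq> y1" "x' \<noteq> y2" using nX X(2) X'(2) y(1-4) by metis+
          then have "x = y1" "x = y2" using j1 j2 y(5,6) a \<open>x' \<noteq> y1'\<close> by auto
          then show False using h(3) y(5,6) a by simp
        qed
        then show False using hxc' a by auto
      qed
    qed
  next
    assume "\<not> (\<exists>e1\<in>delta E X X'. \<exists>e2\<in>delta E X X'. e1 \<inter> e2 = {})"
      "\<not> (\<exists>e1\<in>delta E X X'. \<exists>e2\<in>delta E X X'. e1 \<noteq> e2)" and dd: "D X X' = delta E X X'"
    have "{x, x'} \<in> H" using DH dd xd by blast
    then show "conn Fe (cnt x) (cnt x') 3" unfolding c_def[symmetric] c'_def[symmetric]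
      using route[of "{x, x'}" x x'] X(2) X'(2) xe(2) hxc hxc' by blast
  qed
qed

lemma conn_AF: "conn Ae u v k \<Longrightarrow> conn Fe u v k"
  by (erule conn_mono) (use HA in auto)

lemma gap:
  assumes xV: "x \<in> V" and x'V: "x' \<in> V" and xe: "{x, x'} \<in> E" "{x, x'} \<noteq> e"
  shows "\<exists>m::nat. conn Fe x x' (int m) \<and> real m \<le> \<alpha>"
proof -
  have xx: "x \<noteq> x'" using edgeV[OF xe(1)] by blast
  have ed: "{x, x'} \<in> E - {e}" using xe by blast
  have c1: "conn (E - {e}) x x' 1" by (rule conn_edge[OF ed])
  from conn_gdist[OF c1] have fin: "gdist (E - {e}) x x' \<noteq> \<infinity>" and le1: "int (the_enat (gdist (E - {e}) x x')) \<le> 1" by auto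
  have ne0: "the_enat (gdist (E - {e}) x x') \<noteq> 0"
  proof
    assume z: "the_enat (gdist (E - {e}) x x') = 0"
    obtain p where p: "is_path (E - {e}) p x x'" "gdist (E - {e}) x x' = enat (plen p)" using gdist_attained[OF fin] by blast
    then have "plen p = 0" using z by simp
    then have "length p = 1" using p(1) unfolding is_path_def plen_def by (cases p) auto
    then have "hd p = last p" by (cases p) auto
    then show False using p(1) xx unfolding is_path_def by simp
  qed
  have one: "the_enat (gdist (E - {e}) x x') = 1" using le1 ne0 by linarith
  have "\<forall>e\<in>E. \<forall>s\<in>V. \<forall>t\<in>V. gdist (E - {e}) s t \<noteq> \<infinity> \<longrightarrow>
        gdist (M - {e}) s t \<noteq> \<infinity> \<and>
        real (the_enat (gdist (M - {e}) s t)) \<le> \<alpha> * real (the_enat (gdist (E - {e}) s t))"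
    using mu unfolding mult_EFT_spanner_def by (rule conjunct2)
  then have m: "gdist (M - {e}) x x' \<noteq> \<infinity>" "real (the_enat (gdist (M - {e}) x x')) \<le> \<alpha> * real (the_enat (gdist (E - {e}) x x'))"
    using eE xV x'V fin by blast+
  have "conn (M - {e}) x x' (int (the_enat (gdist (M - {e}) x x')))" by (rule gdist_conn[OF m(1)])
  moreover have "M - {e} \<subseteq> Fe" using HM by blast
  ultimately have "conn Fe x x' (int (the_enat (gdist (M - {e}) x x')))" by (rule conn_mono) simp
  moreover have "real (the_enat (gdist (M - {e}) x x')) \<le> \<alpha>" using m(2) one by simp
  ultimately show ?thesis by blast
qed

lemma cnt_conn: "x = cnt x \<or> {cnt x, x} \<in> Ae \<Longrightarrow> conn Ae (cnt x) x 1"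
proof -
  assume h: "x = cnt x \<or> {cnt x, x} \<in> Ae"
  show ?thesis
  proof (cases "x = cnt x")
    case True
    have "conn Ae x x 1" by (rule conn_refl) simp
    then show ?thesis using True by simp
  next
    case False
    then show ?thesis using h by (intro conn_edge) simp
  qed
qed

lemma transition:
  assumes ncs: "NC s x" and nct: "NC t x'" and xe: "{x, x'} \<in> E" "{x, x'} \<noteq> e"
    and xV: "x \<in> V" and x'V: "x' \<in> V"
  shows "\<exists>k. conn Fe s t k \<and> real_of_int k \<le> real (d s x) + real (d t x') + 1 + 2 * real \<beta> + max 2 (\<alpha> - 3)"
proof -
  have X2: "2 \<le> max 2 (\<alpha> - 3)" "\<alpha> - 3 \<le> max 2 (\<alpha> - 3)" by auto
  obtain m :: nat where gm: "conn Fe x x' (int m)" "real m \<le> \<alpha>" using gap[OF xV x'V xe] by blast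
  have cs: "conn Ae s x (int (d s x) + int \<beta>)" using ncs unfolding NC_def by blast
  have ct: "conn Ae x' t (int (d t x') + int \<beta>)" using nct unfolding NC_def by (blast intro: conn_sym)
  show ?thesis
  proof (cases "x \<in> \<Union>\<C> \<and> x' \<in> \<Union>\<C>")
    case False
    then have "{x, x'} \<in> A" using forced[OF xe(1)] by blast
    then have "conn Ae x x' 1" using xe(2) by (intro conn_edge) simp
    then have "conn Ae s t (int (d s x) + int \<beta> + 1 + (int (d t x') + int \<beta>))"
      by (rule conn_trans[OF conn_trans[OF cs] ct])
    then have "conn Fe s t (int (d s x) + int \<beta> + 1 + (int (d t x') + int \<beta>))" by (rule conn_AF)
    moreover have "real_of_int (int (d s x) + int \<beta> + 1 + (int (d t x') + int \<beta>)) \<le> real (d s x) + real (d t x') + 1 + 2 * real \<beta> + max 2 (\<alpha> - 3)"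
      using X2 by simp
    ultimately show ?thesis by blast
  next
    case True
    have tys: "TY s x" using ncs True unfolding NC_def by blast
    have tyt: "TY t x'" using nct True unfolding NC_def by blast
    have s1: "conn Ae s x (int (d s x) + int \<beta> - 2) \<or>
     (conn Ae s (cnt x) (int (d s x) + int \<beta> - 1) \<and> (x = cnt x \<or> {cnt x, x} \<in> Ae))"
      using tys unfolding TY_def .
    have t1: "conn Ae t x' (int (d t x') + int \<beta> - 2) \<or>
     (conn Ae t (cnt x') (int (d t x') + int \<beta> - 1) \<and> (x' = cnt x' \<or> {cnt x', x'} \<in> Ae))"
      using tyt unfolding TY_def .
    let ?B = "real (d s x) + real (d t x') + 1 + 2 * real \<beta> + max 2 (\<alpha> - 3)"
    from s1 show ?thesis
    proof (elim disjE)
      assume sP: "conn Ae s x (int (d s x) + int \<beta> - 2)"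
      from t1 show ?thesis
      proof (elim disjE)
        assume tP: "conn Ae t x' (int (d t x') + int \<beta> - 2)"
        have "conn Fe s t (int (d s x) + int \<beta> - 2 + int m + (int (d t x') + int \<beta> - 2))"
          by (rule conn_trans[OF conn_trans[OF conn_AF[OF sP] gm(1)] conn_AF[OF conn_sym[OF tP]]])
        moreover have "real_of_int (int (d s x) + int \<beta> - 2 + int m + (int (d t x') + int \<beta> - 2)) \<le> ?B"
          using X2 gm(2) by simp
        ultimately show ?thesis by blast
      next
        assume tChx': "conn Ae t (cnt x') (int (d t x') + int \<beta> - 1) \<and> (x' = cnt x' \<or> {cnt x', x'} \<in> Ae)"
        note tC = conjunct1[OF tChx'] and hx' = conjunct2[OF tChx']
        have "conn Fe s t (int (d s x) + int \<beta> - 2 + int m + 1 + (int (d t x') + int \<beta> - 1))"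
          by (rule conn_trans[OF conn_trans[OF conn_trans[OF conn_AF[OF sP] gm(1)] conn_AF[OF conn_sym[OF cnt_conn[OF hx']]]] conn_AF[OF conn_sym[OF tC]]])
        moreover have "real_of_int (int (d s x) + int \<beta> - 2 + int m + 1 + (int (d t x') + int \<beta> - 1)) \<le> ?B"
          using X2 gm(2) by simp
        ultimately show ?thesis by blast
      qed
    next
      assume sChx: "conn Ae s (cnt x) (int (d s x) + int \<beta> - 1) \<and> (x = cnt x \<or> {cnt x, x} \<in> Ae)"
        note sC = conjunct1[OF sChx] and hx = conjunct2[OF sChx]
      from t1 show ?thesis
      proof (elim disjE)
        assume tP: "conn Ae t x' (int (d t x') + int \<beta> - 2)"
        have "conn Fe s t (int (d s x) + int \<beta> - 1 + 1 + int m + (int (d t x') + int \<beta> - 2))"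
          by (rule conn_trans[OF conn_trans[OF conn_trans[OF conn_AF[OF sC] conn_AF[OF cnt_conn[OF hx]]] gm(1)] conn_AF[OF conn_sym[OF tP]]])
        moreover have "real_of_int (int (d s x) + int \<beta> - 1 + 1 + int m + (int (d t x') + int \<beta> - 2)) \<le> ?B"
          using X2 gm(2) by simp
        ultimately show ?thesis by blast
      next
        assume tChx': "conn Ae t (cnt x') (int (d t x') + int \<beta> - 1) \<and> (x' = cnt x' \<or> {cnt x', x'} \<in> Ae)"
        note tC = conjunct1[OF tChx'] and hx' = conjunct2[OF tChx']
        obtain X where X: "X \<in> \<C>" "x \<in> X" using True by blast
        obtain X' where X': "X' \<in> \<C>" "x' \<in> X'" using True by blast
        have c3: "conn Fe (cnt x) (cnt x') 3" by (rule cc[OF X X' xe hx hx'])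
        have "conn Fe s t (int (d s x) + int \<beta> - 1 + 3 + (int (d t x') + int \<beta> - 1))"
          by (rule conn_trans[OF conn_trans[OF conn_AF[OF sC] c3] conn_AF[OF conn_sym[OF tC]]])
        moreover have "real_of_int (int (d s x) + int \<beta> - 1 + 3 + (int (d t x') + int \<beta> - 1)) \<le> ?B"
          using X2 by simp
        ultimately show ?thesis by blast
      qed
    qed
  qed
qed

lemma main:
  assumes sV: "s \<in> V" and tV: "t \<in> V" and fin: "gdist (E - {e}) s t \<noteq> \<infinity>"
  shows "gdist (H - {e}) s t \<noteq> \<infinity> \<and>
         real (the_enat (gdist (H - {e}) s t))
           \<le> real (the_enat (gdist (E - {e}) s t)) + 2 * real \<beta> + max 2 (\<alpha> - 3)"
proof -
  obtain P where P: "is_path (E - {e}) P s t" "gdist (E - {e}) s t = enat (plen P)"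
    using gdist_attained[OF fin] by blast
  define L where "L = plen P"
  have lenP: "length P = Suc L" using P(1) unfolding L_def plen_def is_path_def by (cases P) auto
  have P0: "P ! 0 = s" using P(1) unfolding is_path_def by (metis hd_conv_nth)
  have PL: "P ! L = t"
  proof -
    have "P \<noteq> []" "last P = t" using P(1) unfolding is_path_def by auto
    then show ?thesis using lenP by (simp add: last_conv_nth)
  qed
  have PE: "j < L \<Longrightarrow> {P ! j, P ! Suc j} \<in> E - {e}" for j using P(1) lenP unfolding is_path_def by simp
  have PV: "P ! j \<in> V" if "j \<le> L" for j
  proof (cases j)
    case 0 then show ?thesis using P0 sV by simp
  next
    case (Suc i)
    then have "{P ! i, P ! j} \<in> E" using PE[of i] that by simp
    then show ?thesis using edgeV by blast
  qed
  have ds: "d s (P ! j) \<le> j \<and> gdist E s (P ! j) \<noteq> \<infinity>" if "j \<le> L" for j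
  proof -
    have "is_path (E - {e}) (take (Suc j) P) s (P ! j) \<and> plen (take (Suc j) P) = j"
      by (rule is_path_take[OF P(1)]) (use that lenP in simp)
    then have p1: "is_path E (take (Suc j) P) s (P ! j)" and p2: "plen (take (Suc j) P) = j"
      using is_path_mono[of "E - {e}" _ s "P ! j" E] by auto
    from path_gdist[OF p1] p2 show ?thesis unfolding d_def by simp
  qed
  have dt: "d t (P ! j) \<le> L - j \<and> gdist E t (P ! j) \<noteq> \<infinity>" if "j \<le> L" for j
  proof -
    have "is_path (E - {e}) (drop j P) (P ! j) t \<and> plen (drop j P) = plen P - j"
      by (rule is_path_drop[OF P(1)]) (use that lenP in simp)
    then have "is_path E (drop j P) (P ! j) t" and p2: "plen (drop j P) = L - j"
      using is_path_mono[of "E - {e}" _ "P ! j" t E] unfolding L_def by auto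
    then have p1: "is_path E (rev (drop j P)) t (P ! j)" by (simp add: is_path_rev)
    from path_gdist[OF p1] p2 show ?thesis unfolding d_def by simp
  qed
  let ?G = "\<exists>k. conn Fe s t k \<and> real_of_int k \<le> real L + 2 * real \<beta> + max 2 (\<alpha> - 3)"
  have claim: "\<forall>j. j + n = L \<longrightarrow> NC s (P ! j) \<longrightarrow> ?G" for n
  proof (induction n)
    case 0
    show ?case
    proof (intro allI impI)
      fix j assume j: "j + 0 = L" "NC s (P ! j)"
      then have "conn Ae s t (int (d s t) + int \<beta>)" using PL unfolding NC_def by simp
      moreover have "d s t \<le> L" using ds[of L] PL by simp
      ultimately have "conn Fe s t (int (d s t) + int \<beta>)" "real_of_int (int (d s t) + int \<beta>) \<le> real L + 2 * real \<beta> + max 2 (\<alpha> - 3)"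
        using conn_AF[of s t] by (blast, simp)
      then show ?G by blast
    qed
  next
    case (Suc n)
    show ?case
    proof (intro allI impI)
      fix j assume j: "j + Suc n = L" "NC s (P ! j)"
      show ?G
      proof (cases "NC s (P ! Suc j)")
        case True
        moreover have "Suc j + n = L" using j(1) by simp
        ultimately show ?G using Suc.IH by blast
      next
        case False
        have jL: "Suc j \<le> L" "j \<le> L" using j(1) by auto
        have crs: "CR s (P ! Suc j)" using side[OF sV PV[OF jL(1)]] ds[OF jL(1)] False by blast
        from side[OF tV PV[OF jL(1)]] dt[OF jL(1)] have "NC t (P ! Suc j) \<or> CR t (P ! Suc j)" by blast
        then show ?G
        proof
          assume crt: "CR t (P ! Suc j)"
          have "conn Ae s t (int (d s (P ! Suc j)) + int (d t (P ! Suc j)) + 2 * int \<beta> - 2)"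
            by (rule good_both[OF crs crt])
          moreover have "d s (P ! Suc j) \<le> Suc j" "d t (P ! Suc j) \<le> L - Suc j" using ds[OF jL(1)] dt[OF jL(1)] by auto
          ultimately have "conn Fe s t (int (d s (P ! Suc j)) + int (d t (P ! Suc j)) + 2 * int \<beta> - 2)"
            "real_of_int (int (d s (P ! Suc j)) + int (d t (P ! Suc j)) + 2 * int \<beta> - 2) \<le> real L + 2 * real \<beta> + max 2 (\<alpha> - 3)"
            using conn_AF[of s t] jL by (blast, simp)
          then show ?G by blast
        next
          assume nct: "NC t (P ! Suc j)"
          have ed: "{P ! j, P ! Suc j} \<in> E" "{P ! j, P ! Suc j} \<noteq> e" using PE[of j] jL j(1) by auto
          obtain k where k: "conn Fe s t k" "real_of_int k \<le> real (d s (P ! j)) + real (d t (P ! Suc j)) + 1 + 2 * real \<beta> + max 2 (\<alpha> - 3)"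
            using transition[OF j(2) nct ed PV[OF jL(2)] PV[OF jL(1)]] by blast
          moreover have "d s (P ! j) \<le> j" "d t (P ! Suc j) \<le> L - Suc j" using ds[OF jL(2)] dt[OF jL(1)] by auto
          ultimately have "real_of_int k \<le> real L + 2 * real \<beta> + max 2 (\<alpha> - 3)" using jL by linarith
          then show ?G using k(1) by blast
        qed
      qed
    qed
  qed
  have "NC s (P ! 0)" using NC_self[OF sV] P0 by simp
  then obtain k where k: "conn Fe s t k" "real_of_int k \<le> real L + 2 * real \<beta> + max 2 (\<alpha> - 3)"
    using claim[of L] by auto
  from conn_gdist[OF k(1)] have "gdist Fe s t \<noteq> \<infinity>" "int (the_enat (gdist Fe s t)) \<le> k" by auto
  moreover have "the_enat (gdist (E - {e}) s t) = L" using P(2) unfolding L_def by simp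
  ultimately show ?thesis using k(2) by linarith
qed

end

theorem theorem3:
  shows "(\<exists>c::real. \<forall>(V::'a set) E A M \<C> cnt (\<alpha>::real) (\<beta>::nat) H.
            graph V E \<and> clustering_based_spanner V E A \<beta> \<C> cnt \<and>
            mult_EFT_spanner V E M \<alpha> \<and> alg2_output E \<C> cnt M A H \<longrightarrow>
            real (card H) \<le> c * real (card A + card M + card V + (card \<C>)\<^sup>2))
       \<and> (\<forall>(V::'a set) E A M \<C> cnt (\<alpha>::real) (\<beta>::nat) H.
            graph V E \<and> clustering_based_spanner V E A \<beta> \<C> cnt \<and>
            mult_EFT_spanner V E M \<alpha> \<and> alg2_output E \<C> cnt M A H \<longrightarrow>
            (\<forall>e\<in>E. \<forall>s\<in>V. \<forall>t\<in>V. gdist (E - {e}) s t \<noteq> \<infinity> \<longrightarrow>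
               gdist (H - {e}) s t \<noteq> \<infinity> \<and>
               real (the_enat (gdist (H - {e}) s t))
                 \<le> real (the_enat (gdist (E - {e}) s t)) + 2 * real \<beta> + max 2 (\<alpha> - 3)))"
proof (intro conjI)
  show "\<exists>c::real. \<forall>(V::'a set) E A M \<C> cnt (\<alpha>::real) (\<beta>::nat) H.
            graph V E \<and> clustering_based_spanner V E A \<beta> \<C> cnt \<and>
            mult_EFT_spanner V E M \<alpha> \<and> alg2_output E \<C> cnt M A H \<longrightarrow>
            real (card H) \<le> c * real (card A + card M + card V + (card \<C>)\<^sup>2)"
    by (intro exI[of _ 2] allI impI) (use part1 in blast)
next
  show "\<forall>(V::'a set) E A M \<C> cnt (\<alpha>::real) (\<beta>::nat) H.
            graph V E \<and> clustering_based_spanner V E A \<beta> \<C> cnt \<and>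
            mult_EFT_spanner V E M \<alpha> \<and> alg2_output E \<C> cnt M A H \<longrightarrow>
            (\<forall>e\<in>E. \<forall>s\<in>V. \<forall>t\<in>V. gdist (E - {e}) s t \<noteq> \<infinity> \<longrightarrow>
               gdist (H - {e}) s t \<noteq> \<infinity> \<and>
               real (the_enat (gdist (H - {e}) s t))
                 \<le> real (the_enat (gdist (E - {e}) s t)) + 2 * real \<beta> + max 2 (\<alpha> - 3))"
  proof (intro allI impI ballI)
    fix V :: "'a set" and E A M \<C> cnt \<alpha> \<beta> H e s t
    assume h: "graph V E \<and> clustering_based_spanner V E A \<beta> \<C> cnt \<and>
            mult_EFT_spanner V E M \<alpha> \<and> alg2_output E \<C> cnt M A H"
      and eE: "e \<in> E" and sV: "s \<in> V" and tV: "t \<in> V" and fin: "gdist (E - {e}) s t \<noteq> \<infinity>"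
    interpret L2 V E A M \<C> cnt \<alpha> \<beta> H e using h eE by unfold_locales auto
    show "gdist (H - {e}) s t \<noteq> \<infinity> \<and>
               real (the_enat (gdist (H - {e}) s t))
                 \<le> real (the_enat (gdist (E - {e}) s t)) + 2 * real \<beta> + max 2 (\<alpha> - 3)"
      by (rule main[OF sV tV fin])
  qed
qed

end
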